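(* Let $(V,\|\cdot\|)$ be a rectilinear normed plane, i.e. one whose unit circle is a parallelogram. Then $c_B(\|\cdot\|)=\frac12$.
   Context: A normed (Minkowski) plane $(V,\|\cdot\|)$ is a two-dimensional real vector space with a norm; $o$ is the origin, $B=\{v:\|v\|\le1\}$ the unit ball, $S=\{v:\|v\|=1\}$ the unit circle. For distinct $x,y$, $\mathrm{bis}(x,y)=\{z\in V:\|z-x\|=\|z-y\|\}$. For $x\in S$, the inner projection is $\mathrm{P_I}(x)=\{z/\|z\|: z\in(\mathrm{bis}(-x,x)\cap B)\setminus\{o\}\}$. The sine function is $s:S\times S\to\mathbb{R}$, $s(u,v)=\inf_{t\in\mathbb{R}}\|u+tv\|$. The constant $c_B$ is $c_B(\|\cdot\|)=\inf_{x\in S}\ \inf_{w\in\mathrm{P_I}(x)} s(w,x)$. *)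

theory Defs
  imports "HOL-Analysis.Analysis"
begin

definition is_norm :: "(real^2 \<Rightarrow> real) \<Rightarrow> bool" where
  "is_norm N \<longleftrightarrow>
     (\<forall>x. N x = 0 \<longleftrightarrow> x = 0) \<and>
     (\<forall>c x. N (c *\<^sub>R x) = \<bar>c\<bar> * N x) \<and>
     (\<forall>x y. N (x + y) \<le> N x + N y)"

definition unit_ball_N :: "(real^2 \<Rightarrow> real) \<Rightarrow> (real^2) set" where
  "unit_ball_N N = {v. N v \<le> 1}"

definition unit_circle_N :: "(real^2 \<Rightarrow> real) \<Rightarrow> (real^2) set" where
  "unit_circle_N N = {v. N v = 1}"

definition parallelogram :: "(real^2) set \<Rightarrow> bool" where
  "parallelogram P \<longleftrightarrow> (\<exists>p u v. independent {u, v} \<and> u \<noteq> v \<and>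
      P = convex hull {p, p + u, p + v, p + u + v})"

definition rectilinear :: "(real^2 \<Rightarrow> real) \<Rightarrow> bool" where
  "rectilinear N \<longleftrightarrow> (\<exists>P. parallelogram P \<and> unit_circle_N N = frontier P)"

definition bis :: "(real^2 \<Rightarrow> real) \<Rightarrow> real^2 \<Rightarrow> real^2 \<Rightarrow> (real^2) set" where
  "bis N x y = {z. N (z - x) = N (z - y)}"

definition inner_proj :: "(real^2 \<Rightarrow> real) \<Rightarrow> real^2 \<Rightarrow> (real^2) set" where
  "inner_proj N x = (\<lambda>z. (1 / N z) *\<^sub>R z) ` ((bis N (- x) x \<inter> unit_ball_N N) - {0})"

definition sine_N :: "(real^2 \<Rightarrow> real) \<Rightarrow> real^2 \<Rightarrow> real^2 \<Rightarrow> real" where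
  "sine_N N u v = (INF t\<in>(UNIV::real set). N (u + t *\<^sub>R v))"

definition c_B :: "(real^2 \<Rightarrow> real) \<Rightarrow> real" where
  "c_B N = (INF x\<in>unit_circle_N N. (INF w\<in>inner_proj N x. sine_N N w x))"

end

theory Submission
  imports Defs
begin


lemma lin1: "(a::real) - b \<le> c \<Longrightarrow> \<not> a \<le> 2*d \<Longrightarrow> b \<le> d \<Longrightarrow> a \<le> 2*c" by linarith
lemma lin2: "(a::real) \<le> 2 * c \<Longrightarrow> a \<le> 2 * max b c" by (simp add: le_max_iff_disj)

lemma lin3: "(a::real) \<le> 2 * b \<Longrightarrow> a \<le> 2 * max b c" by (simp add: le_max_iff_disj)

lemma low1_core:
  fixes a z1 z2 t y :: real
  assumes ab: "\<bar>a\<bar> \<le> 1" and bis: "max \<bar>z1+1\<bar> \<bar>z2+a\<bar> = max \<bar>z1-1\<bar> \<bar>z2-a\<bar>"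
    and z1b: "\<bar>z1\<bar> \<le> 1" and z2b: "\<bar>z2\<bar> \<le> 1"
    and y1: "\<bar>y\<bar> \<le> \<bar>t\<bar>"
    and s1: "t \<ge> 0 \<Longrightarrow> a \<ge> 0 \<Longrightarrow> y \<ge> 0" and s2: "t \<le> 0 \<Longrightarrow> a \<le> 0 \<Longrightarrow> y \<ge> 0"
    and s3: "t \<ge> 0 \<Longrightarrow> a \<le> 0 \<Longrightarrow> y \<le> 0" and s4: "t \<le> 0 \<Longrightarrow> a \<ge> 0 \<Longrightarrow> y \<le> 0"
  shows "max \<bar>z1\<bar> \<bar>z2\<bar> \<le> 2 * max \<bar>z1+t\<bar> \<bar>z2+y\<bar>"
proof -
  consider "z1 = 0" | "z1 > 0" | "z1 < 0" by linarith
  then show ?thesis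
  proof cases
    case 1
    show ?thesis
    proof (cases "2 * \<bar>t\<bar> \<ge> \<bar>z2\<bar>")
      case True
      then have "\<bar>z2\<bar> \<le> 2 * max \<bar>t\<bar> \<bar>z2+y\<bar>" by (rule lin3)
      then show ?thesis using 1 by simp
    next
      case False
      then have "\<bar>z2 + y\<bar> \<ge> \<bar>z2\<bar> - \<bar>y\<bar>" by (simp add: abs_triangle_ineq2_sym)
      from lin1[OF this False y1] have "2 * \<bar>z2 + y\<bar> \<ge> \<bar>z2\<bar>" .
      then have "\<bar>z2\<bar> \<le> 2 * max \<bar>t\<bar> \<bar>z2+y\<bar>" by (rule lin2)
      then show ?thesis using 1 by simp
    qed
  next
    case 2
    have m1: "\<bar>z1 - 1\<bar> < z1 + 1" "\<bar>z1+1\<bar> = z1 + 1" using 2 z1b by auto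
    have r: "\<bar>z2 - a\<bar> \<ge> z1 + 1" using bis m1 by (simp add: max_def split: if_splits)
    have sg: "(z2 > 0 \<and> a < 0) \<or> (z2 < 0 \<and> a > 0)" using r 2 ab z2b by (auto simp: abs_if split: if_splits)
    have mz: "max \<bar>z1\<bar> \<bar>z2\<bar> = \<bar>z2\<bar>"
    proof -
      have "\<bar>z2 + a\<bar> < \<bar>z2 - a\<bar>" using sg by (auto simp: abs_if; arith)
      then have "z1 + 1 = \<bar>z2 - a\<bar>" using bis m1 r by (simp add: max_def split: if_splits)
      then have "z1 \<le> \<bar>z2\<bar>" using sg ab by (auto simp: abs_if; arith)
      then show ?thesis using 2 by simp
    qed
    show ?thesis unfolding mz
    proof (cases "t \<ge> 0")
      case tp: True
      show "\<bar>z2\<bar> \<le> 2 * max \<bar>z1+t\<bar> \<bar>z2+y\<bar>"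
      proof (cases "2 * t \<ge> \<bar>z2\<bar>")
        case True
        have "\<bar>z1+t\<bar> \<le> max \<bar>z1+t\<bar> \<bar>z2 + y\<bar>" by simp
        moreover have "\<bar>z1+t\<bar> \<ge> t" using 2 tp by simp
        ultimately show ?thesis using True by linarith
      next
        case False
        have "\<bar>y\<bar> \<le> t" using y1 tp by simp
        then have "2 * \<bar>z2 + y\<bar> \<ge> \<bar>z2\<bar>" using False sg s1 s3 tp by (auto simp: abs_if; arith)
        then show ?thesis by (rule lin2)
      qed
    next
      case tn: False
      then have "2 * \<bar>z2 + y\<bar> \<ge> \<bar>z2\<bar>" using sg s2 s4 by (auto simp: abs_if; arith)
      then show "\<bar>z2\<bar> \<le> 2 * max \<bar>z1+t\<bar> \<bar>z2+y\<bar>" by (rule lin2)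
    qed
  next
    case 3
    have m1: "\<bar>z1 + 1\<bar> < 1 - z1" "\<bar>z1-1\<bar> = 1 - z1" using 3 z1b by auto
    have r: "\<bar>z2 + a\<bar> \<ge> 1 - z1" using bis m1 by (simp add: max_def split: if_splits)
    have sg: "(z2 > 0 \<and> a > 0) \<or> (z2 < 0 \<and> a < 0)" using r 3 ab z2b by (auto simp: abs_if split: if_splits)
    have mz: "max \<bar>z1\<bar> \<bar>z2\<bar> = \<bar>z2\<bar>"
    proof -
      have "\<bar>z2 - a\<bar> < \<bar>z2 + a\<bar>" using sg by (auto simp: abs_if; arith)
      then have "1 - z1 = \<bar>z2 + a\<bar>" using bis m1 r by (simp add: max_def split: if_splits)
      then have "- z1 \<le> \<bar>z2\<bar>" using sg ab by (auto simp: abs_if; arith)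
      then show ?thesis using 3 by simp
    qed
    show ?thesis unfolding mz
    proof (cases "t \<le> 0")
      case tn: True
      show "\<bar>z2\<bar> \<le> 2 * max \<bar>z1+t\<bar> \<bar>z2+y\<bar>"
      proof (cases "- 2 * t \<ge> \<bar>z2\<bar>")
        case True
        have "\<bar>z1+t\<bar> \<le> max \<bar>z1+t\<bar> \<bar>z2 + y\<bar>" by simp
        moreover have "\<bar>z1+t\<bar> \<ge> - t" using 3 tn by simp
        ultimately show ?thesis using True by linarith
      next
        case False
        have "\<bar>y\<bar> \<le> - t" using y1 tn by simp
        then have "2 * \<bar>z2 + y\<bar> \<ge> \<bar>z2\<bar>" using False sg s2 s4 tn by (auto simp: abs_if; arith)
        then show ?thesis by (rule lin2)
      qed
    next
      case tp: False
      then have "2 * \<bar>z2 + y\<bar> \<ge> \<bar>z2\<bar>" using sg s1 s3 by (auto simp: abs_if; arith)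
      then show "\<bar>z2\<bar> \<le> 2 * max \<bar>z1+t\<bar> \<bar>z2+y\<bar>" by (rule lin2)
    qed
  qed
qed

lemma low1:
  fixes a z1 z2 t :: real
  assumes "\<bar>a\<bar> \<le> 1" "max \<bar>z1+1\<bar> \<bar>z2+a\<bar> = max \<bar>z1-1\<bar> \<bar>z2-a\<bar>" "\<bar>z1\<bar> \<le> 1" "\<bar>z2\<bar> \<le> 1"
  shows "max \<bar>z1\<bar> \<bar>z2\<bar> \<le> 2 * max \<bar>z1+t\<bar> \<bar>z2+t*a\<bar>"
proof (rule low1_core[OF assms])
  show "\<bar>t*a\<bar> \<le> \<bar>t\<bar>" using assms(1) by (simp add: abs_mult mult_left_le)
qed (auto simp: mult_nonneg_nonneg mult_nonpos_nonpos mult_nonneg_nonpos mult_nonpos_nonneg)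

lemma low2:
  fixes x1 x2 z1 z2 t :: real
  assumes "max \<bar>x1\<bar> \<bar>x2\<bar> = 1" "max \<bar>z1+x1\<bar> \<bar>z2+x2\<bar> = max \<bar>z1-x1\<bar> \<bar>z2-x2\<bar>" "\<bar>z1\<bar> \<le> 1" "\<bar>z2\<bar> \<le> 1"
  shows "max \<bar>z1\<bar> \<bar>z2\<bar> \<le> 2 * max \<bar>z1+t*x1\<bar> \<bar>z2+t*x2\<bar>"
proof -
  consider "x1 = 1" "\<bar>x2\<bar> \<le> 1" | "x1 = -1" "\<bar>x2\<bar> \<le> 1" | "x2 = 1" "\<bar>x1\<bar> \<le> 1" | "x2 = -1" "\<bar>x1\<bar> \<le> 1"
    using assms(1) by linarith
  then show ?thesis
  proof cases
    case 1
    have h: "max \<bar>z1+1\<bar> \<bar>z2+x2\<bar> = max \<bar>z1-1\<bar> \<bar>z2-x2\<bar>" using assms(2) 1 by simp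
    from low1[OF 1(2) h assms(3,4), of t] show ?thesis using 1 by simp
  next
    case 2
    have a: "\<bar>-x2\<bar> \<le> 1" using 2 by simp
    have h0: "max \<bar>z1-1\<bar> \<bar>z2+x2\<bar> = max \<bar>z1+1\<bar> \<bar>z2-x2\<bar>" using assms(2) 2 by simp
    then have h: "max \<bar>z1+1\<bar> \<bar>z2+(-x2)\<bar> = max \<bar>z1-1\<bar> \<bar>z2-(-x2)\<bar>" by simp
    have e: "z1 + -t = z1 + t*x1" "z2 + -t * -x2 = z2 + t*x2" using 2 by simp_all
    from low1[OF a h assms(3,4), of "-t"] show ?thesis unfolding e .
  next
    case 3
    have h: "max \<bar>z2+1\<bar> \<bar>z1+x1\<bar> = max \<bar>z2-1\<bar> \<bar>z1-x1\<bar>" using assms(2) 3 by (simp add: max.commute)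
    have e: "max \<bar>z2\<bar> \<bar>z1\<bar> = max \<bar>z1\<bar> \<bar>z2\<bar>" "max \<bar>z2+t\<bar> \<bar>z1+t*x1\<bar> = max \<bar>z1+t*x1\<bar> \<bar>z2+t*x2\<bar>"
      using 3 by (simp_all add: max.commute)
    from low1[OF 3(2) h assms(4,3), of t] show ?thesis unfolding e .
  next
    case 4
    have a: "\<bar>-x1\<bar> \<le> 1" using 4 by simp
    have h0: "max \<bar>z1+x1\<bar> \<bar>z2-1\<bar> = max \<bar>z1-x1\<bar> \<bar>z2+1\<bar>" using assms(2) 4 by simp
    then have h: "max \<bar>z2+1\<bar> \<bar>z1+(-x1)\<bar> = max \<bar>z2-1\<bar> \<bar>z1-(-x1)\<bar>" by (simp add: max.commute)
    have e: "max \<bar>z2\<bar> \<bar>z1\<bar> = max \<bar>z1\<bar> \<bar>z2\<bar>" "max \<bar>z2+-t\<bar> \<bar>z1+-t * -x1\<bar> = max \<bar>z1+t*x1\<bar> \<bar>z2+t*x2\<bar>"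
      using 4 by (simp_all add: max.commute)
    from low1[OF a h assms(4,3), of "-t"] show ?thesis unfolding e .
  qed
qed

definition Mx :: "real^2 \<Rightarrow> real" where "Mx q = max \<bar>q$1\<bar> \<bar>q$2\<bar>"

lemma Mx_nonneg: "0 \<le> Mx q" by (simp add: Mx_def)

lemma F1:
  assumes x: "x \<in> unit_circle_N Mx" and w: "w \<in> inner_proj Mx x"
  shows "sine_N Mx w x \<ge> 1/2"
proof -
  obtain z where z: "Mx (z + x) = Mx (z - x)" "Mx z \<le> 1" "z \<noteq> 0" and wz: "w = (1 / Mx z) *\<^sub>R z"
    using w unfolding inner_proj_def bis_def unit_ball_N_def by auto
  define m where "m = Mx z"
  have "m \<noteq> 0" using z(3) by (auto simp: m_def Mx_def vec_eq_iff forall_2)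
  then have m0: "m > 0" using Mx_nonneg[of z] m_def by auto
  have x1: "max \<bar>x$1\<bar> \<bar>x$2\<bar> = 1" using x by (simp add: unit_circle_N_def Mx_def)
  have zb: "\<bar>z$1\<bar> \<le> 1" "\<bar>z$2\<bar> \<le> 1" using z(2) by (auto simp: Mx_def)
  have bz: "max \<bar>z$1+x$1\<bar> \<bar>z$2+x$2\<bar> = max \<bar>z$1-x$1\<bar> \<bar>z$2-x$2\<bar>" using z(1) by (simp add: Mx_def)
  show ?thesis unfolding sine_N_def
  proof (rule cINF_greatest)
    fix t :: real
    have L: "m \<le> 2 * max \<bar>z$1+(t*m)*x$1\<bar> \<bar>z$2+(t*m)*x$2\<bar>"
      using low2[OF x1 bz zb, of "t*m"] by (simp add: m_def Mx_def)
    have e1: "\<bar>z$1/m + t*x$1\<bar> = \<bar>z$1+(t*m)*x$1\<bar> / m" "\<bar>z$2/m + t*x$2\<bar> = \<bar>z$2+(t*m)*x$2\<bar> / m"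
      using m0 by (simp_all add: field_simps)
    have c: "(w + t *\<^sub>R x)$1 = z$1/m + t*x$1" "(w + t *\<^sub>R x)$2 = z$2/m + t*x$2"
      by (simp_all add: wz m_def divide_inverse mult.commute)
    have "Mx (w + t *\<^sub>R x) = max (\<bar>z$1+(t*m)*x$1\<bar> / m) (\<bar>z$2+(t*m)*x$2\<bar> / m)"
      unfolding Mx_def c e1 ..
    also have "\<dots> = max \<bar>z$1+(t*m)*x$1\<bar> \<bar>z$2+(t*m)*x$2\<bar> / m"
      using m0 by (simp add: max_divide_distrib_right)
    also have "\<dots> \<ge> 1/2" using L m0 by (simp add: field_simps)
    finally show "1/2 \<le> Mx (w + t *\<^sub>R x)" .
  qed simp
qed

lemma F2:
  assumes x: "x \<in> unit_circle_N Mx"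
  shows "inner_proj Mx x \<noteq> {}"
proof -
  have x1: "max \<bar>x$1\<bar> \<bar>x$2\<bar> = 1" using x by (simp add: unit_circle_N_def Mx_def)
  have "\<exists>z. Mx (z + x) = Mx (z - x) \<and> Mx z \<le> 1 \<and> z \<noteq> 0"
  proof -
    consider "\<bar>x$1\<bar> = 1" "\<bar>x$2\<bar> < 1" | "\<bar>x$2\<bar> = 1" "\<bar>x$1\<bar> < 1" | "\<bar>x$1\<bar> = 1" "\<bar>x$2\<bar> = 1"
      using x1 by linarith
    then show ?thesis
    proof cases
      case 1
      show ?thesis
        by (rule exI[of _ "vector[0, 1 - \<bar>x$2\<bar>]"]) (use 1 in \<open>auto simp: Mx_def vec_eq_iff forall_2\<close>)
    next
      case 2
      show ?thesis
        by (rule exI[of _ "vector[1 - \<bar>x$1\<bar>, 0]"]) (use 2 in \<open>auto simp: Mx_def vec_eq_iff forall_2\<close>)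
    next
      case 3
      show ?thesis
        by (rule exI[of _ "vector[x$1, - x$2]"]) (use 3 in \<open>auto simp: Mx_def vec_eq_iff forall_2\<close>)
    qed
  qed
  then show ?thesis unfolding inner_proj_def bis_def unit_ball_N_def by auto
qed

lemma F3:
  fixes a :: real
  assumes "0 \<le> a" "a < 1"
  shows "vector[1,a] \<in> unit_circle_N Mx"
    and "vector[0,1] \<in> inner_proj Mx (vector[1,a])"
    and "sine_N Mx (vector[0,1]) (vector[1,a]) \<le> 1/(1+a)"
proof -
  show "vector[1,a] \<in> unit_circle_N Mx" using assms by (simp add: unit_circle_N_def Mx_def)
  let ?z = "vector[0, 1-a] :: real^2"
  have "?z \<in> (bis Mx (- vector[1,a]) (vector[1,a]) \<inter> unit_ball_N Mx) - {0}"
    using assms by (auto simp: bis_def unit_ball_N_def Mx_def vec_eq_iff forall_2)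
  moreover have "vector[0,1] = (1 / Mx ?z) *\<^sub>R ?z"
    using assms by (auto simp: Mx_def vec_eq_iff forall_2)
  ultimately show "vector[0,1] \<in> inner_proj Mx (vector[1,a])"
    unfolding inner_proj_def by blast
  have "sine_N Mx (vector[0,1]) (vector[1,a]) \<le> Mx (vector[0,1] + (-1/(1+a)) *\<^sub>R vector[1,a])"
    unfolding sine_N_def by (rule cINF_lower) (auto intro: bdd_belowI[of _ 0] simp: Mx_nonneg)
  also have "\<dots> = 1/(1+a)"
  proof -
    have "1 - a/(1+a) = 1/(1+a)" using assms by (simp add: field_simps)
    then show ?thesis using assms by (simp add: Mx_def)
  qed
  finally show "sine_N Mx (vector[0,1]) (vector[1,a]) \<le> 1/(1+a)" .
qed

lemma cB_Mx: "c_B Mx = 1/2"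
proof -
  define g where "g x = (INF w\<in>inner_proj Mx x. sine_N Mx w x)" for x
  have g1: "g x \<ge> 1/2" if "x \<in> unit_circle_N Mx" for x
    unfolding g_def by (rule cINF_greatest) (use F1 F2 that in auto)
  have bdd: "bdd_below (g ` unit_circle_N Mx)" using g1 by (auto intro: bdd_belowI[of _ "1/2"])
  have ne: "unit_circle_N Mx \<noteq> {}" using F3(1)[of 0] by auto
  have ge: "c_B Mx \<ge> 1/2" unfolding c_B_def g_def[symmetric]
    by (rule cINF_greatest) (use ne g1 in auto)
  have le: "c_B Mx \<le> 1/(1+a)" if "0 \<le> a" "a < 1" for a
  proof -
    have "c_B Mx \<le> g (vector[1,a])" unfolding c_B_def g_def[symmetric]
      by (rule cINF_lower[OF bdd F3(1)[OF that]])
    also have "\<dots> \<le> sine_N Mx (vector[0,1]) (vector[1,a])" unfolding g_def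
      by (rule cINF_lower[OF _ F3(2)[OF that]]) (use F1 F3(1)[OF that] in \<open>auto intro: bdd_belowI[of _ "1/2"]\<close>)
    also have "\<dots> \<le> 1/(1+a)" by (rule F3(3)[OF that])
    finally show ?thesis .
  qed
  have "c_B Mx \<le> 1/2"
  proof (rule ccontr)
    assume c: "\<not> c_B Mx \<le> 1/2"
    show False
    proof (cases "c_B Mx \<ge> 3/2")
      case True then show False using le[of 0] by simp
    next
      case False
      have "c_B Mx \<le> 1/(1 + (3/2 - c_B Mx))" using le[of "3/2 - c_B Mx"] c False by simp
      moreover have "1/(1 + (3/2 - c_B Mx)) < c_B Mx"
      proof -
        have "0 < (2 - c_B Mx) * (c_B Mx - 1/2)" using c False by (intro mult_pos_pos) auto
        then have "1 < c_B Mx * (5/2 - c_B Mx)" by (simp add: algebra_simps)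
        then show ?thesis using c False by (simp add: field_simps)
      qed
      ultimately show False by simp
    qed
  qed
  with ge show ?thesis by simp
qed
lemma cB_inv:
  fixes K :: "real^2 \<Rightarrow> real^2"
  assumes lin: "linear K" and bij: "bij K"
  shows "c_B (\<lambda>z. N (K z)) = c_B N"
proof -
  let ?N' = "\<lambda>z. N (K z)"
  have inj: "inj K" and surj: "surj K" using bij by (auto simp: bij_def)
  have K0: "K z = 0 \<longleftrightarrow> z = 0" for z
    using inj linear_0[OF lin] by (metis injD)
  have S: "unit_circle_N ?N' = K -` unit_circle_N N" by (auto simp: unit_circle_N_def)
  have KS: "K ` unit_circle_N ?N' = unit_circle_N N" unfolding S using surj by (simp add: surj_image_vimage_eq)
  have sine: "sine_N ?N' w x = sine_N N (K w) (K x)" for w x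
    unfolding sine_N_def by (simp add: linear_add[OF lin] linear_scale[OF lin])
  have A: "(bis ?N' (-x) x \<inter> unit_ball_N ?N') - {0} = K -` ((bis N (- K x) (K x) \<inter> unit_ball_N N) - {0})" for x
    by (auto simp: bis_def unit_ball_N_def linear_diff[OF lin] linear_neg[OF lin] linear_add[OF lin] K0)
  have IP: "K ` inner_proj ?N' x = inner_proj N (K x)" for x
  proof -
    have "K ` inner_proj ?N' x = (\<lambda>z. (1 / N (K z)) *\<^sub>R K z) ` ((bis ?N' (-x) x \<inter> unit_ball_N ?N') - {0})"
      unfolding inner_proj_def image_image by (simp add: linear_scale[OF lin])
    also have "\<dots> = (\<lambda>y. (1 / N y) *\<^sub>R y) ` (K ` ((bis ?N' (-x) x \<inter> unit_ball_N ?N') - {0}))"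
      by (simp add: image_image)
    also have "K ` ((bis ?N' (-x) x \<inter> unit_ball_N ?N') - {0}) = (bis N (- K x) (K x) \<inter> unit_ball_N N) - {0}"
      unfolding A using surj by (simp add: surj_image_vimage_eq)
    finally show ?thesis unfolding inner_proj_def .
  qed
  define g where "g y = (INF w\<in>inner_proj N y. sine_N N w y)" for y
  have "c_B ?N' = (INF x\<in>unit_circle_N ?N'. (INF w\<in>inner_proj ?N' x. sine_N N (K w) (K x)))"
    unfolding c_B_def sine ..
  also have "\<dots> = (INF x\<in>unit_circle_N ?N'. g (K x))"
  proof -
    have "(INF w\<in>inner_proj ?N' x. sine_N N (K w) (K x)) = g (K x)" for x
      unfolding g_def IP[of x, symmetric] image_image ..
    then show ?thesis by simp
  qed
  also have "\<dots> = (INF y\<in>K ` unit_circle_N ?N'. g y)" by (simp add: image_image)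
  also have "\<dots> = c_B N" unfolding KS g_def c_B_def ..
  finally show ?thesis .
qed


lemma unit_cart: "cbox (0::real^'n) 1 = convex hull {x. \<forall>i. (x$i = 0) \<or> (x$i = 1)}"
  unfolding Cart_1 unit_interval_convex_hull[where 'a="real^'n"] box_real[symmetric]
  by (rule arg_cong[where f="\<lambda>x. convex hull x"]) (simp add: Basis_vec_def inner_axis)

lemma corners2: "{x::real^2. \<forall>i. (x$i = 0) \<or> (x$i = 1)} = {vector[0,0], vector[1,0], vector[0,1], vector[1,1]}"
  by (auto simp: vec_eq_iff forall_2)

lemma indep2:
  fixes u v :: "real^2"
  assumes "independent {u, v}" "u \<noteq> v" "a *\<^sub>R u + b *\<^sub>R v = 0"
  shows "a = 0 \<and> b = 0"
proof -
  have nu: "u \<notin> span {v}" and v0: "v \<noteq> 0"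
    using assms(1,2) by (auto simp: independent_insert dependent_single)
  have "a = 0"
  proof (rule ccontr)
    assume "a \<noteq> 0"
    have e: "a *\<^sub>R u = - (b *\<^sub>R v)" using assms(3) by (simp add: eq_neg_iff_add_eq_0)
    have "u = (1/a) *\<^sub>R (a *\<^sub>R u)" using \<open>a \<noteq> 0\<close> by simp
    also have "\<dots> = (- b / a) *\<^sub>R v" unfolding e by simp
    finally have "u = (- b / a) *\<^sub>R v" .
    then have "u \<in> span {v}" by (metis span_base span_scale singletonI)
    with nu show False by simp
  qed
  then show ?thesis using assms(3) v0 by simp
qed

lemma norm_facts:
  assumes "is_norm N"
  shows "N 0 = 0" "N (- x) = N x" "N x \<ge> 0" "N (c *\<^sub>R x) = \<bar>c\<bar> * N x" "N (x + y) \<le> N x + N y"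
    "N x = 0 \<longleftrightarrow> x = 0"
proof -
  have A: "\<And>x. N x = 0 \<longleftrightarrow> x = 0" and B: "\<And>c x. N (c *\<^sub>R x) = \<bar>c\<bar> * N x"
    and C: "\<And>x y. N (x + y) \<le> N x + N y"
    using assms unfolding is_norm_def by blast+
  show n0: "N 0 = 0" "N (c *\<^sub>R x) = \<bar>c\<bar> * N x" "N (x + y) \<le> N x + N y" "N x = 0 \<longleftrightarrow> x = 0"
    using A B C by auto
  have neg: "N (- z) = N z" for z using B[of "-1" z] by simp
  then show "N (- x) = N x" .
  have "N (x + - x) \<le> N x + N (- x)" by (rule C)
  then show "N x \<ge> 0" using n0 neg by simp
qed

lemma S_desc:
  assumes r: "rectilinear N"
  obtains c0 K where "linear K" "bij K"
    "\<And>s. s \<in> unit_circle_N N \<longleftrightarrow> (\<exists>q. Mx q = 1 \<and> s = c0 + K q)"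
proof -
  obtain P p u v where ind: "independent {u,v}" "u \<noteq> v" and P: "P = convex hull {p, p+u, p+v, p+u+v}"
    and S: "unit_circle_N N = frontier P"
    using r unfolding rectilinear_def parallelogram_def by blast
  define L where "L = (\<lambda>w::real^2. w$1 *\<^sub>R u + w$2 *\<^sub>R v)"
  have linL: "linear L" unfolding L_def by (rule linearI) (simp_all add: scaleR_add_left scaleR_add_right)
  have injL: "inj L"
  proof (rule injI)
    fix x y assume "L x = L y"
    moreover have "(x$1 - y$1) *\<^sub>R u + (x$2 - y$2) *\<^sub>R v = L x - L y" by (simp add: L_def algebra_simps)
    ultimately have "(x$1 - y$1) *\<^sub>R u + (x$2 - y$2) *\<^sub>R v = 0" by simp
    then have "x$1 - y$1 = 0 \<and> x$2 - y$2 = 0" by (rule indep2[OF ind])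
    then show "x = y" by (simp add: vec_eq_iff forall_2)
  qed
  define C where "C = cbox (0::real^2) 1"
  have corners: "{p, p+u, p+v, p+u+v} = (\<lambda>x. p + x) ` L ` {x. \<forall>i. x$i = 0 \<or> x$i = 1}"
    unfolding corners2 by (simp add: L_def add.assoc)
  have P2: "P = (\<lambda>x. p + x) ` L ` C"
    unfolding P corners C_def unit_cart convex_hull_translation convex_hull_linear_image[OF linL] ..
  have FL: "frontier (L ` C) = L ` (C - box 0 1)"
  proof -
    have "frontier (L ` C) = closure (L ` C) - interior (L ` C)" by (simp add: frontier_def)
    also have "\<dots> = L ` closure C - L ` interior C"
      by (simp add: closure_injective_linear_image[OF linL injL] interior_injective_linear_image[OF linL injL])
    also have "\<dots> = L ` (closure C - interior C)" by (simp add: image_set_diff[OF injL])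
    also have "closure C - interior C = C - box 0 1" unfolding C_def by simp
    finally show ?thesis .
  qed
  have FP: "frontier P = (\<lambda>x. p + x) ` L ` (C - box 0 1)"
    unfolding P2 using frontier_translation[of p "L ` C"] FL by simp
  define c0 where "c0 = p + (1/2) *\<^sub>R (u + v)"
  define K where "K = (\<lambda>q::real^2. (q$1/2) *\<^sub>R u + (q$2/2) *\<^sub>R v)"
  have linK: "linear K" unfolding K_def by (rule linearI) (simp_all add: scaleR_add_left scaleR_add_right add_divide_distrib)
  have injK: "inj K"
  proof (rule injI)
    fix x y assume "K x = K y"
    moreover have "((x$1 - y$1)/2) *\<^sub>R u + ((x$2 - y$2)/2) *\<^sub>R v = K x - K y" by (simp add: K_def algebra_simps diff_divide_distrib)
    ultimately have "((x$1 - y$1)/2) *\<^sub>R u + ((x$2 - y$2)/2) *\<^sub>R v = 0" by simp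
    then have "(x$1 - y$1)/2 = 0 \<and> (x$2 - y$2)/2 = 0" by (rule indep2[OF ind])
    then show "x = y" by (simp add: vec_eq_iff forall_2)
  qed
  have bijK: "bij K" using linK injK by (simp add: bij_def linear_injective_imp_surjective)
  have desc: "s \<in> unit_circle_N N \<longleftrightarrow> (\<exists>q. Mx q = 1 \<and> s = c0 + K q)" for s
  proof
    assume "s \<in> unit_circle_N N"
    then obtain w where w: "w \<in> C" "w \<notin> box 0 1" and s: "s = p + L w" unfolding S FP by auto
    have wc: "0 \<le> w$1" "w$1 \<le> 1" "0 \<le> w$2" "w$2 \<le> 1" "\<not> (0 < w$1 \<and> w$1 < 1 \<and> 0 < w$2 \<and> w$2 < 1)"
      using w unfolding C_def mem_box_cart forall_2 by auto
    let ?q = "vector[2*w$1 - 1, 2*w$2 - 1] :: real^2"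
    have "Mx ?q = 1" using wc unfolding Mx_def by (simp add: max_def) linarith
    moreover have "s = c0 + K ?q" unfolding s c0_def K_def L_def
      by (simp add: vec_eq_iff algebra_simps diff_divide_distrib)
    ultimately show "\<exists>q. Mx q = 1 \<and> s = c0 + K q" by blast
  next
    assume "\<exists>q. Mx q = 1 \<and> s = c0 + K q"
    then obtain q where q: "Mx q = 1" "s = c0 + K q" by blast
    let ?w = "vector[(q$1 + 1)/2, (q$2 + 1)/2] :: real^2"
    have qc: "max \<bar>q$1\<bar> \<bar>q$2\<bar> = 1" using q(1) by (simp add: Mx_def)
    have "?w \<in> C" "?w \<notin> box 0 1" using qc unfolding C_def mem_box_cart forall_2 by (auto simp: max_def split: if_splits)
    moreover have "s = p + L ?w" unfolding q(2) c0_def K_def L_def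
      by (simp add: vec_eq_iff algebra_simps add_divide_distrib)
    ultimately show "s \<in> unit_circle_N N" unfolding S FP by blast
  qed
  show ?thesis by (rule that[OF linK bijK desc])
qed
theorem mainTheorem14:
  fixes N :: "real^2 \<Rightarrow> real"
  assumes "is_norm N"
    and "rectilinear N"
  shows "c_B N = 1 / 2"
proof -
  note nf = norm_facts[OF assms(1)]
  obtain K c0 where linK: "linear K" and bijK: "bij K"
    and desc: "\<And>s. s \<in> unit_circle_N N \<longleftrightarrow> (\<exists>q. Mx q = 1 \<and> s = c0 + K q)"
  proof (rule S_desc[OF assms(2)])
    fix c0' K' assume "linear K'" "bij K'" "\<And>s. s \<in> unit_circle_N N \<longleftrightarrow> (\<exists>q. Mx q = 1 \<and> s = c0' + K' q)"
    then show thesis by (rule that)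
  qed
  have shift: "s - 2 *\<^sub>R c0 \<in> unit_circle_N N" if sS: "s \<in> unit_circle_N N" for s
  proof -
    obtain q where q: "Mx q = 1" "s = c0 + K q" using desc[of s] sS by blast
    have "Mx (- q) = 1" using q(1) by (simp add: Mx_def)
    then have "c0 + K (- q) \<in> unit_circle_N N" using desc[of "c0 + K (- q)"] by blast
    then have "N (c0 - K q) = 1" by (simp add: unit_circle_N_def linear_neg[OF linK])
    moreover have "s - 2 *\<^sub>R c0 = - (c0 - K q)" unfolding q(2) by (simp add: algebra_simps scaleR_2)
    ultimately show ?thesis using nf(2)[of "c0 - K q"] unfolding unit_circle_N_def by (simp only: mem_Collect_eq)
  qed
  define s0 where "s0 = c0 + K (vector[1,0])"
  have "Mx (vector[1,0]) = 1" by (simp add: Mx_def)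
  then have s0: "s0 \<in> unit_circle_N N" using desc[of s0] unfolding s0_def by blast
  have iter: "s0 - (2 * real k) *\<^sub>R c0 \<in> unit_circle_N N" for k :: nat
  proof (induction k)
    case 0 then show ?case using s0 by simp
  next
    case (Suc k)
    have eq: "s0 - (2 * real (Suc k)) *\<^sub>R c0 = (s0 - (2 * real k) *\<^sub>R c0) - 2 *\<^sub>R c0"
      by (simp add: algebra_simps)
    show ?case unfolding eq by (rule shift[OF Suc])
  qed
  have bound: "(2 * real k) * N c0 \<le> 2" for k :: nat
  proof -
    have "(2 * real k) *\<^sub>R c0 = s0 + - (s0 - (2 * real k) *\<^sub>R c0)" by simp
    then have "N ((2 * real k) *\<^sub>R c0) \<le> N s0 + N (- (s0 - (2 * real k) *\<^sub>R c0))"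
      using nf(5) by metis
    also have "\<dots> = 2" using s0 iter[of k] nf(2)[of "s0 - (2 * real k) *\<^sub>R c0"]
      unfolding unit_circle_N_def by (simp only: mem_Collect_eq)
    finally show ?thesis using nf(4) by simp
  qed
  have "N c0 = 0"
  proof (rule ccontr)
    assume "N c0 \<noteq> 0"
    then have pos: "N c0 > 0" using nf(3)[of c0] by simp
    obtain k :: nat where "1 / N c0 < real k" using reals_Archimedean2 by blast
    then have "1 < real k * N c0" using pos by (simp add: field_simps)
    with bound[of k] show False by simp
  qed
  then have c0: "c0 = 0" using nf(6) by simp
  have NK: "N (K q) = Mx q" for q
  proof (cases "q = 0")
    case True then show ?thesis using nf(1) linear_0[OF linK] by (simp add: Mx_def)
  next
    case False
    define m where "m = Mx q"
    have "m \<noteq> 0" using False by (auto simp: m_def Mx_def vec_eq_iff forall_2)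
    then have m0: "m > 0" by (simp add: m_def Mx_def less_le)
    have "max (\<bar>q$1\<bar> / m) (\<bar>q$2\<bar> / m) = max \<bar>q$1\<bar> \<bar>q$2\<bar> / m"
      using m0 by (simp add: max_divide_distrib_right)
    also have "\<dots> = 1" using m0 by (simp add: m_def Mx_def)
    finally have "Mx ((1/m) *\<^sub>R q) = 1" using m0 by (simp add: Mx_def abs_mult divide_inverse_commute)
    then have "K ((1/m) *\<^sub>R q) \<in> unit_circle_N N" using desc[of "K ((1/m) *\<^sub>R q)"] c0 by auto
    then have "N (K ((1/m) *\<^sub>R q)) = 1" by (simp add: unit_circle_N_def)
    then have "N ((1/m) *\<^sub>R K q) = 1" by (simp add: linear_scale[OF linK])
    then have "(1/m) * N (K q) = 1" using nf(4) m0 by simp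
    then show ?thesis using m0 by (simp add: m_def field_simps)
  qed
  have "c_B N = c_B (\<lambda>z. N (K z))" by (rule cB_inv[OF linK bijK, symmetric])
  also have "(\<lambda>z. N (K z)) = Mx" using NK by auto
  finally show ?thesis using cB_Mx by simp
qed

end
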